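(* Let $D$ be a lower bounded distributive lattice. Then $M(D_\infty)\cong M(D)\oplus\mathbb{Z}$, where the splitting is induced by the natural homomorphisms $D\to D_\infty\to\mathbf{2}$ and $\mathbf{2}\to D_\infty$.
   Context: For a lower bounded distributive lattice $D$, $D_\infty$ is the bounded distributive lattice obtained by adjoining a new top element $\infty$. $\mathbf{2}=\{0\le 1\}$; the map $D_\infty\to\mathbf{2}$ sends every element other than $\infty$ to $0$ and $\infty$ to $1$, and $\mathbf{2}\to D_\infty$ sends $0\mapsto 0$, $1\mapsto\infty$. The module of motives $M(D)$ is $\mathbb{Z}[D]$ modulo $[0]=0$ and $[U]+[V]=[U\vee V]+[U\wedge V]$, functorial in lattice homomorphisms preserving $0$. *)

theory Defs
  imports "HOL-Algebra.Free_Abelian_Groups" "HOL-Algebra.Elementary_Groups"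
begin

datatype 'a withtop = Fin 'a | Infty

instantiation withtop :: (order) order
begin
fun less_eq_withtop :: "'a withtop \<Rightarrow> 'a withtop \<Rightarrow> bool" where
  "less_eq_withtop (Fin x) (Fin y) = (x \<le> y)"
| "less_eq_withtop _ Infty = True"
| "less_eq_withtop Infty (Fin _) = False"
definition less_withtop :: "'a withtop \<Rightarrow> 'a withtop \<Rightarrow> bool" where
  "less_withtop x y = (x \<le> y \<and> \<not> y \<le> x)"
instance
proof
  fix x y z :: "'a withtop"
  show "(x < y) = (x \<le> y \<and> \<not> y \<le> x)" by (simp add: less_withtop_def)
  show "x \<le> x" by (cases x) auto
  show "x \<le> y \<Longrightarrow> y \<le> z \<Longrightarrow> x \<le> z"
    by (cases x; cases y; cases z) auto
  show "x \<le> y \<Longrightarrow> y \<le> x \<Longrightarrow> x = y"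
    by (cases x; cases y) auto
qed
end

instantiation withtop :: (lattice) lattice
begin
fun sup_withtop :: "'a withtop \<Rightarrow> 'a withtop \<Rightarrow> 'a withtop" where
  "sup_withtop (Fin x) (Fin y) = Fin (sup x y)"
| "sup_withtop _ _ = Infty"
fun inf_withtop :: "'a withtop \<Rightarrow> 'a withtop \<Rightarrow> 'a withtop" where
  "inf_withtop (Fin x) (Fin y) = Fin (inf x y)"
| "inf_withtop (Fin x) Infty = Fin x"
| "inf_withtop Infty y = y"
instance
proof
  fix x y z :: "'a withtop"
  show "inf x y \<le> x" by (cases x; cases y) auto
  show "inf x y \<le> y" by (cases x; cases y) auto
  show "x \<le> y \<Longrightarrow> x \<le> z \<Longrightarrow> x \<le> inf y z" by (cases x; cases y; cases z) auto
  show "x \<le> sup x y" by (cases x; cases y) auto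
  show "y \<le> sup x y" by (cases x; cases y) auto
  show "y \<le> x \<Longrightarrow> z \<le> x \<Longrightarrow> sup y z \<le> x" by (cases x; cases y; cases z) auto
qed
end

instance withtop :: (distrib_lattice) distrib_lattice
proof
  fix x y z :: "'a withtop"
  show "sup x (inf y z) = inf (sup x y) (sup x z)"
    by (cases x; cases y; cases z) (auto simp: sup_inf_distrib1)
qed

instantiation withtop :: (order_bot) order_bot
begin
definition bot_withtop :: "'a withtop" where "bot_withtop = Fin bot"
instance by standard (case_tac a; simp add: bot_withtop_def)
end

definition motive_rels :: "('a::{distrib_lattice, order_bot} \<Rightarrow>\<^sub>0 int) set" where
  "motive_rels = {frag_of bot} \<union>
     {frag_of U + frag_of V - frag_of (sup U V) - frag_of (inf U V) | U V. True}"

definition motive_subgroup :: "('a::{distrib_lattice, order_bot} \<Rightarrow>\<^sub>0 int) set" where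
  "motive_subgroup = generate (free_Abelian_group UNIV) motive_rels"

definition motives :: "(('a::{distrib_lattice, order_bot} \<Rightarrow>\<^sub>0 int) set) monoid" where
  "motives = free_Abelian_group UNIV Mod motive_subgroup"

definition motive_map ::
  "('a::{distrib_lattice, order_bot} \<Rightarrow> 'b::{distrib_lattice, order_bot})
     \<Rightarrow> ('a \<Rightarrow>\<^sub>0 int) set \<Rightarrow> ('b \<Rightarrow>\<^sub>0 int) set" where
  "motive_map f C =
     (\<Union>x\<in>C. motive_subgroup #>\<^bsub>free_Abelian_group UNIV\<^esub> frag_extend (frag_of \<circ> f) x)"

text \<open>The natural maps D \<rightarrow> D_\<infinity>, D_\<infinity> \<rightarrow> 2 and 2 \<rightarrow> D_\<infinity> (2 is bool, False < True).\<close>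

definition to_two :: "'a withtop \<Rightarrow> bool" where
  "to_two x = (x = Infty)"

definition from_two :: "bool \<Rightarrow> 'a::order_bot withtop" where
  "from_two b = (if b then Infty else Fin bot)"

end

theory Submission
  imports Defs
begin

abbreviation FG :: "('a \<Rightarrow>\<^sub>0 int) monoid" where "FG \<equiv> free_Abelian_group UNIV"

lemma rc: "H #>\<^bsub>FG\<^esub> a = (\<lambda>h. h + a) ` H"
  by (auto simp: r_coset_def)

lemma sg_zero: "subgroup S FG \<Longrightarrow> 0 \<in> S"
  using subgroup.one_closed[of S FG] by simp
lemma sg_add: "subgroup S FG \<Longrightarrow> x \<in> S \<Longrightarrow> y \<in> S \<Longrightarrow> x + y \<in> S"
  using subgroup.m_closed[of S FG x y] by simp
lemma sg_neg: "subgroup S FG \<Longrightarrow> x \<in> S \<Longrightarrow> - x \<in> S"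
  using subgroup.m_inv_closed[of S FG x] by simp
lemma sg_diff: "subgroup S FG \<Longrightarrow> x \<in> S \<Longrightarrow> y \<in> S \<Longrightarrow> x - y \<in> S"
  using sg_add[of S x "- y"] sg_neg[of S y] by simp

lemma rc_eq:
  assumes "subgroup S FG" "a - b \<in> S"
  shows "S #>\<^bsub>FG\<^esub> a = S #>\<^bsub>FG\<^esub> b"
proof -
  have "(\<lambda>h. h + a) ` S \<subseteq> (\<lambda>h. h + b) ` S"
  proof
    fix x assume "x \<in> (\<lambda>h. h + a) ` S"
    then obtain h where h: "h \<in> S" "x = h + a" by auto
    have "x = (h + (a - b)) + b" using h by simp
    moreover have "h + (a - b) \<in> S" using sg_add assms h by blast
    ultimately show "x \<in> (\<lambda>h. h + b) ` S" by blast
  qed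
  moreover have "(\<lambda>h. h + b) ` S \<subseteq> (\<lambda>h. h + a) ` S"
  proof
    fix x assume "x \<in> (\<lambda>h. h + b) ` S"
    then obtain h where h: "h \<in> S" "x = h + b" by auto
    have "x = (h - (a - b)) + a" using h by simp
    moreover have "h - (a - b) \<in> S" using sg_diff assms h by blast
    ultimately show "x \<in> (\<lambda>h. h + a) ` S" by blast
  qed
  ultimately show ?thesis by (simp add: rc)
qed

lemma rc_self: "subgroup S FG \<Longrightarrow> a \<in> S #>\<^bsub>FG\<^esub> a"
  unfolding rc using sg_zero[of S] by (metis add_0 image_eqI)

lemma rc_eqD:
  assumes "subgroup S FG" "S #>\<^bsub>FG\<^esub> a = S #>\<^bsub>FG\<^esub> b"
  shows "a - b \<in> S"
proof -
  have "a \<in> (\<lambda>h. h + b) ` S" using rc_self[OF assms(1), of a] assms(2) by (simp add: rc)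
  then obtain h where "h \<in> S" "a = h + b" by auto
  then show ?thesis by simp
qed

lemma rc_zero: "subgroup S FG \<Longrightarrow> S #>\<^bsub>FG\<^esub> 0 = S"
  by (simp add: rc)

lemma rc_in: "subgroup S FG \<Longrightarrow> c \<in> S \<Longrightarrow> S #>\<^bsub>FG\<^esub> c = S"
  using rc_eq[of S c 0] rc_zero[of S] by simp

lemma rc_mult:
  assumes "subgroup S FG"
  shows "(S #>\<^bsub>FG\<^esub> a) <#>\<^bsub>FG\<^esub> (S #>\<^bsub>FG\<^esub> b) = S #>\<^bsub>FG\<^esub> (a + b)"
proof -
  have "(\<Union>x\<in>(\<lambda>h. h + a) ` S. \<Union>y\<in>(\<lambda>h. h + b) ` S. {x + y}) = (\<lambda>h. h + (a + b)) ` S"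
  proof (intro equalityI subsetI)
    fix z assume "z \<in> (\<Union>x\<in>(\<lambda>h. h + a) ` S. \<Union>y\<in>(\<lambda>h. h + b) ` S. {x + y})"
    then obtain h1 h2 where h: "h1 \<in> S" "h2 \<in> S" "z = (h1 + a) + (h2 + b)" by auto
    then have "z = (h1 + h2) + (a + b)" by (simp add: algebra_simps)
    moreover have "h1 + h2 \<in> S" using sg_add assms h by blast
    ultimately show "z \<in> (\<lambda>h. h + (a + b)) ` S" by blast
  next
    fix z assume "z \<in> (\<lambda>h. h + (a + b)) ` S"
    then obtain h where h: "h \<in> S" "z = h + (a + b)" by auto
    then have "z = (h + a) + (0 + b)" by (simp add: algebra_simps)
    then show "z \<in> (\<Union>x\<in>(\<lambda>h. h + a) ` S. \<Union>y\<in>(\<lambda>h. h + b) ` S. {x + y})"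
      using h sg_zero[OF assms] by blast
  qed
  then show ?thesis by (simp add: set_mult_def rc)
qed

lemma mod_carrier: "carrier (FG Mod S) = range (\<lambda>a. S #>\<^bsub>FG\<^esub> a)"
  by (auto simp: FactGroup_def RCOSETS_def)

lemma mod_mult: "X \<otimes>\<^bsub>FG Mod S\<^esub> Y = X <#>\<^bsub>FG\<^esub> Y"
  by (simp add: FactGroup_def)

lemma mod_one: "\<one>\<^bsub>FG Mod S\<^esub> = S"
  by (simp add: FactGroup_def)

lemma ind_rc:
  assumes S: "subgroup S FG" and T: "subgroup T FG" and hS: "\<forall>x\<in>S. h x \<in> T"
    and add: "\<And>x y. h (x + y) = h x + h y"
  shows "(\<Union>x\<in>S #>\<^bsub>FG\<^esub> a. T #>\<^bsub>FG\<^esub> h x) = T #>\<^bsub>FG\<^esub> h a"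
proof -
  have "T #>\<^bsub>FG\<^esub> h x = T #>\<^bsub>FG\<^esub> h a" if xa: "x \<in> S #>\<^bsub>FG\<^esub> a" for x
  proof -
    obtain s where s: "s \<in> S" "x = s + a" using xa unfolding rc by blast
    have "h x - h a = h s" using s add by simp
    then show ?thesis using rc_eq[OF T] hS s by simp
  qed
  then show ?thesis using rc_self[OF S, of a] by blast
qed

lemma ind_hom:
  assumes S: "subgroup S FG" and T: "subgroup T FG" and hS: "\<forall>x\<in>S. h x \<in> T"
    and add: "\<And>x y. h (x + y) = h x + h y"
  shows "(\<lambda>C. \<Union>x\<in>C. T #>\<^bsub>FG\<^esub> h x) \<in> hom (FG Mod S) (FG Mod T)"
proof -
  note ir = ind_rc[OF S T hS add]
  show ?thesis
    unfolding hom_def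
  proof (intro CollectI conjI ballI Pi_I)
    fix X assume "X \<in> carrier (FG Mod S)"
    then obtain a where "X = S #>\<^bsub>FG\<^esub> a" by (auto simp: mod_carrier)
    then show "(\<Union>x\<in>X. T #>\<^bsub>FG\<^esub> h x) \<in> carrier (FG Mod T)"
      using ir by (auto simp: mod_carrier)
  next
    fix X Y assume "X \<in> carrier (FG Mod S)" "Y \<in> carrier (FG Mod S)"
    then obtain a b where ab: "X = S #>\<^bsub>FG\<^esub> a" "Y = S #>\<^bsub>FG\<^esub> b" by (auto simp: mod_carrier)
    show "(\<Union>x\<in>X \<otimes>\<^bsub>FG Mod S\<^esub> Y. T #>\<^bsub>FG\<^esub> h x) =
          (\<Union>x\<in>X. T #>\<^bsub>FG\<^esub> h x) \<otimes>\<^bsub>FG Mod T\<^esub> (\<Union>x\<in>Y. T #>\<^bsub>FG\<^esub> h x)"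
      using ab ir by (simp add: mod_mult rc_mult[OF S] rc_mult[OF T] add)
  qed
qed

lemma fe_in:
  assumes "subgroup T FG" "\<And>x. g x \<in> T"
  shows "frag_extend g c \<in> T"
  using subset_UNIV[of "Poly_Mapping.keys c"]
proof (induction c rule: frag_induction)
  case zero then show ?case using sg_zero[OF assms(1)] by simp
next
  case (one x) then show ?case using assms by simp
next
  case (diff a b) then show ?case using sg_diff[OF assms(1)] by (simp add: frag_extend_diff)
qed

lemma fe_compose: "frag_extend f (frag_extend g c) = frag_extend (frag_extend f \<circ> g) c"
  using subset_UNIV[of "Poly_Mapping.keys c"]
  by (induction c rule: frag_induction) (auto simp: frag_extend_diff)

lemma ms_sg: "subgroup (motive_subgroup :: ('a::{distrib_lattice,order_bot} \<Rightarrow>\<^sub>0 int) set) FG"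
  unfolding motive_subgroup_def by (rule group.generate_is_subgroup) auto

lemma ms_bot: "frag_of bot \<in> motive_subgroup"
  unfolding motive_subgroup_def motive_rels_def by (rule generate.incl) simp

lemma ms_rel: "frag_of U + frag_of V - frag_of (sup U V) - frag_of (inf U V) \<in> motive_subgroup"
  unfolding motive_subgroup_def motive_rels_def by (rule generate.incl) blast

lemma ms_induct:
  assumes T: "subgroup T FG" and rels: "\<forall>r\<in>motive_rels. h r \<in> T"
    and add: "\<And>x y. h (x + y) = h x + h y"
    and x: "x \<in> motive_subgroup"
  shows "h x \<in> T"
proof -
  have h0: "h 0 = 0" using add[of 0 0] by simp
  have hm: "h (- y) = - h y" for y using minus_unique[of "h y" "h (- y)"] add[of y "- y"] h0 by simp
  show ?thesis using x unfolding motive_subgroup_def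
  proof (induction rule: generate.induct)
    case one then show ?case using h0 sg_zero[OF T] by simp
  next
    case (incl r) then show ?case using rels by blast
  next
    case (inv r) then show ?case using rels hm sg_neg[OF T] by simp
  next
    case (eng a b) then show ?case using add sg_add[OF T] by simp
  qed
qed

lemma mm_rc_hom:
  fixes f :: "'a::{distrib_lattice,order_bot} \<Rightarrow> 'b::{distrib_lattice,order_bot}"
  assumes fb: "f bot = bot" and fs: "\<And>x y. f (sup x y) = sup (f x) (f y)"
    and fi: "\<And>x y. f (inf x y) = inf (f x) (f y)"
  shows "motive_map f \<in> hom motives motives"
    "motive_map f (motive_subgroup #>\<^bsub>FG\<^esub> a) = motive_subgroup #>\<^bsub>FG\<^esub> frag_extend (frag_of \<circ> f) a"
proof -
  let ?h = "frag_extend (frag_of \<circ> f)"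
  have add: "\<And>x y. ?h (x + y) = ?h x + ?h y" by (simp add: frag_extend_add)
  have rels: "\<forall>r\<in>motive_rels. ?h r \<in> (motive_subgroup :: ('b \<Rightarrow>\<^sub>0 int) set)"
    unfolding motive_rels_def
    using ms_bot ms_rel by (auto simp: fb fs fi frag_extend_add frag_extend_diff)
  have hS: "\<forall>x\<in>motive_subgroup. ?h x \<in> (motive_subgroup :: ('b \<Rightarrow>\<^sub>0 int) set)"
    using ms_induct[OF ms_sg rels add] by blast
  show "motive_map f \<in> hom motives motives"
    unfolding motive_map_def motives_def using ind_hom[OF ms_sg ms_sg hS add] .
  show "motive_map f (motive_subgroup #>\<^bsub>FG\<^esub> a) = motive_subgroup #>\<^bsub>FG\<^esub> ?h a"
    unfolding motive_map_def using ind_rc[OF ms_sg ms_sg hS add] .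
qed


lemma Fin_bot: "(Fin::'a::{distrib_lattice,order_bot} \<Rightarrow> 'a withtop) bot = bot"
  by (simp add: bot_withtop_def)
lemma Fin_sup: "Fin (sup x y) = sup (Fin x) (Fin y)" by simp
lemma Fin_inf: "Fin (inf x y) = inf (Fin x) (Fin y)" by simp

lemma tt_bot: "to_two (bot :: 'a::{distrib_lattice,order_bot} withtop) = bot"
  by (simp add: to_two_def bot_withtop_def)
lemma tt_sup: "to_two (sup x y) = sup (to_two x) (to_two y)"
  by (cases x; cases y) (simp_all add: to_two_def)
lemma tt_inf: "to_two (inf x y) = inf (to_two x) (to_two y)"
  by (cases x; cases y) (simp_all add: to_two_def)

lemma ft_bot: "(from_two bot :: 'a::{distrib_lattice,order_bot} withtop) = bot"
  by (simp add: from_two_def bot_withtop_def)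
lemma ft_sup: "(from_two (sup x y) :: 'a::{distrib_lattice,order_bot} withtop) = sup (from_two x) (from_two y)"
  by (cases x; cases y) (simp_all add: from_two_def)
lemma ft_inf: "(from_two (inf x y) :: 'a::{distrib_lattice,order_bot} withtop) = inf (from_two x) (from_two y)"
  by (cases x; cases y) (simp_all add: from_two_def)

lemma tt_ft: "to_two (from_two b) = b"
  by (simp add: to_two_def from_two_def)

definition qg :: "'a withtop \<Rightarrow> ('a \<Rightarrow>\<^sub>0 int)" where
  "qg u = (case u of Fin x \<Rightarrow> frag_of x | Infty \<Rightarrow> 0)"

lemma qg_simps [simp]: "qg (Fin x) = frag_of x" "qg Infty = 0"
  by (simp_all add: qg_def)

lemma qg_S: "\<forall>x\<in>(motive_subgroup :: ('a::{distrib_lattice,order_bot} withtop \<Rightarrow>\<^sub>0 int) set).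
   frag_extend qg x \<in> (motive_subgroup :: ('a \<Rightarrow>\<^sub>0 int) set)"
proof
  fix x :: "'a withtop \<Rightarrow>\<^sub>0 int"
  assume x: "x \<in> motive_subgroup"
  have rels: "\<forall>r\<in>motive_rels. frag_extend qg r \<in> (motive_subgroup :: ('a \<Rightarrow>\<^sub>0 int) set)"
  proof
    fix r :: "'a withtop \<Rightarrow>\<^sub>0 int" assume "r \<in> motive_rels"
    then consider "r = frag_of bot" | U V where "r = frag_of U + frag_of V - frag_of (sup U V) - frag_of (inf U V)"
      unfolding motive_rels_def by blast
    then show "frag_extend qg r \<in> motive_subgroup"
    proof cases
      case 1 then show ?thesis using ms_bot by (simp add: bot_withtop_def)
    next
      case 2
      then show ?thesis
        using ms_rel sg_zero[OF ms_sg]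
        by (cases U; cases V) (simp_all add: frag_extend_add frag_extend_diff)
    qed
  qed
  show "frag_extend qg x \<in> motive_subgroup"
    using ms_induct[OF ms_sg rels _ x] by (simp add: frag_extend_add)
qed

lemma qm_hom: "(\<lambda>C. \<Union>x\<in>C. motive_subgroup #>\<^bsub>FG\<^esub> frag_extend qg x)
   \<in> hom (motives :: ('a::{distrib_lattice,order_bot} withtop \<Rightarrow>\<^sub>0 int) set monoid) (motives :: ('a \<Rightarrow>\<^sub>0 int) set monoid)"
  unfolding motives_def by (rule ind_hom[OF ms_sg ms_sg qg_S]) (simp add: frag_extend_add)

lemma qm_rc: "(\<Union>x\<in>(motive_subgroup :: ('a::{distrib_lattice,order_bot} withtop \<Rightarrow>\<^sub>0 int) set) #>\<^bsub>FG\<^esub> c.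
    (motive_subgroup :: ('a \<Rightarrow>\<^sub>0 int) set) #>\<^bsub>FG\<^esub> frag_extend qg x)
   = motive_subgroup #>\<^bsub>FG\<^esub> frag_extend qg c"
  by (rule ind_rc[OF ms_sg ms_sg qg_S]) (simp add: frag_extend_add)

lemma ms2_true:
  assumes "x \<in> (motive_subgroup :: (bool \<Rightarrow>\<^sub>0 int) set)"
  shows "Poly_Mapping.lookup x True = 0"
  using assms unfolding motive_subgroup_def
proof (induction rule: generate.induct)
  case one then show ?case by simp
next
  case (incl r)
  then consider "r = frag_of bot" | U V where "r = frag_of U + frag_of V - frag_of (sup U V) - frag_of (inf U V)"
    unfolding motive_rels_def by blast
  then show ?case
  proof cases
    case 1 then show ?thesis by simp
  next
    case 2 then show ?thesis
      by (cases U; cases V) (simp_all add: lookup_add lookup_minus)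
  qed
next
  case (inv r)
  then consider "r = frag_of bot" | U V where "r = frag_of U + frag_of V - frag_of (sup U V) - frag_of (inf U V)"
    unfolding motive_rels_def by blast
  then show ?case
  proof cases
    case 1 then show ?thesis by simp
  next
    case 2 then show ?thesis
      by (cases U; cases V) (simp_all add: lookup_add lookup_minus)
  qed
next
  case (eng a b) then show ?case by (simp add: lookup_add)
qed

lemma bool_decomp: "(c :: bool \<Rightarrow>\<^sub>0 int) = frag_cmul (Poly_Mapping.lookup c False) (frag_of False) + frag_cmul (Poly_Mapping.lookup c True) (frag_of True)"
  by (rule poly_mapping_eqI) (auto simp: lookup_add)

lemma cmul_in: "subgroup S FG \<Longrightarrow> x \<in> S \<Longrightarrow> frag_cmul k x \<in> S"
  by (rule frag_closure_minus_cmul[where P = "\<lambda>x. x \<in> S"]) (auto intro: sg_zero sg_diff)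


lemma ab4: "((x1::'b::ab_group_add) - x2) + (y1 - y2) - (a - b) = (x1 + y1 - a) - (x2 + y2 - b)"
  by (simp add: algebra_simps)

theorem lemma3p36:
  fixes D :: "'a::{distrib_lattice, order_bot} itself"
  defines "MD \<equiv> (motives :: ('a \<Rightarrow>\<^sub>0 int) set monoid)"
      and "MDi \<equiv> (motives :: ('a withtop \<Rightarrow>\<^sub>0 int) set monoid)"
      and "M2 \<equiv> (motives :: (bool \<Rightarrow>\<^sub>0 int) set monoid)"
      and "i \<equiv> motive_map (Fin :: 'a \<Rightarrow> 'a withtop)"
      and "p \<equiv> motive_map (to_two :: 'a withtop \<Rightarrow> bool)"
      and "s \<equiv> motive_map (from_two :: bool \<Rightarrow> 'a withtop)"
  shows "i \<in> hom MD MDi \<and> p \<in> hom MDi M2 \<and> s \<in> hom M2 MDi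
       \<and> (\<forall>x\<in>carrier MD. p (i x) = \<one>\<^bsub>M2\<^esub>)
       \<and> (\<forall>y\<in>carrier M2. p (s y) = y)
       \<and> (\<lambda>(x, y). i x \<otimes>\<^bsub>MDi\<^esub> s y) \<in> iso (MD \<times>\<times> M2) MDi
       \<and> M2 \<cong> integer_group"
proof -
  let ?MS = "motive_subgroup :: ('a \<Rightarrow>\<^sub>0 int) set"
  let ?MSi = "motive_subgroup :: ('a withtop \<Rightarrow>\<^sub>0 int) set"
  let ?MS2 = "motive_subgroup :: (bool \<Rightarrow>\<^sub>0 int) set"
  let ?fin = "frag_extend (frag_of \<circ> (Fin :: 'a \<Rightarrow> 'a withtop))"
  let ?pt = "frag_extend (frag_of \<circ> (to_two :: 'a withtop \<Rightarrow> bool))"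
  let ?ft = "frag_extend (frag_of \<circ> (from_two :: bool \<Rightarrow> 'a withtop))"
  note Fi = mm_rc_hom[OF Fin_bot[where 'a='a] Fin_sup Fin_inf]
  note Ti = mm_rc_hom[OF tt_bot[where 'a='a] tt_sup tt_inf]
  note Si = mm_rc_hom[OF ft_bot[where 'a='a] ft_sup ft_inf]
  have ih: "i \<in> hom MD MDi" using Fi(1) by (simp add: i_def MD_def MDi_def)
  have ph: "p \<in> hom MDi M2" using Ti(1) by (simp add: p_def M2_def MDi_def)
  have sh: "s \<in> hom M2 MDi" using Si(1) by (simp add: s_def M2_def MDi_def)
  have irc: "i (?MS #>\<^bsub>FG\<^esub> a) = ?MSi #>\<^bsub>FG\<^esub> ?fin a" for a
    using Fi(2) by (simp add: i_def)
  have prc: "p (?MSi #>\<^bsub>FG\<^esub> c) = ?MS2 #>\<^bsub>FG\<^esub> ?pt c" for c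
    using Ti(2) by (simp add: p_def)
  have src: "s (?MS2 #>\<^bsub>FG\<^esub> b) = ?MSi #>\<^bsub>FG\<^esub> ?ft b" for b
    using Si(2) by (simp add: s_def)
  have cMD: "X \<in> carrier MD \<longleftrightarrow> (\<exists>a. X = ?MS #>\<^bsub>FG\<^esub> a)" for X
    unfolding MD_def motives_def mod_carrier by auto
  have cMDi: "X \<in> carrier MDi \<longleftrightarrow> (\<exists>a. X = ?MSi #>\<^bsub>FG\<^esub> a)" for X
    unfolding MDi_def motives_def mod_carrier by auto
  have cM2: "X \<in> carrier M2 \<longleftrightarrow> (\<exists>a. X = ?MS2 #>\<^bsub>FG\<^esub> a)" for X
    unfolding M2_def motives_def mod_carrier by auto
  have multMDi: "X \<otimes>\<^bsub>MDi\<^esub> Y = X <#>\<^bsub>FG\<^esub> Y" for X Y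
    unfolding MDi_def motives_def mod_mult ..
  have pfin: "?pt (?fin a) \<in> ?MS2" for a
  proof -
    have "?pt (?fin a) = frag_extend ((frag_of \<circ> to_two) \<circ> Fin) a"
      by (rule frag_extend_compose)
    also have "\<dots> \<in> ?MS2"
      by (rule fe_in[OF ms_sg]) (simp add: to_two_def ms_bot[where 'a=bool, simplified])
    finally show ?thesis .
  qed
  have pft: "?pt (?ft b) = b" for b
  proof -
    have "?pt (?ft b) = frag_extend ((frag_of \<circ> (to_two :: 'a withtop \<Rightarrow> bool)) \<circ> from_two) b"
      by (rule frag_extend_compose)
    also have "\<dots> = frag_extend frag_of b" by (simp add: o_def tt_ft)
    finally show ?thesis using frag_expansion[of b] by simp
  qed
  have P4: "\<forall>x\<in>carrier MD. p (i x) = \<one>\<^bsub>M2\<^esub>"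
  proof
    fix x assume "x \<in> carrier MD"
    then obtain a where a: "x = ?MS #>\<^bsub>FG\<^esub> a" using cMD by blast
    show "p (i x) = \<one>\<^bsub>M2\<^esub>"
      using a irc prc rc_in[OF ms_sg pfin] by (simp add: M2_def motives_def mod_one)
  qed
  have P5: "\<forall>y\<in>carrier M2. p (s y) = y"
    using cM2 src prc pft by auto
  define Phi where "Phi = (\<lambda>(x, y). i x \<otimes>\<^bsub>MDi\<^esub> s y)"
  have Phi_rc: "Phi (?MS #>\<^bsub>FG\<^esub> a, ?MS2 #>\<^bsub>FG\<^esub> b) = ?MSi #>\<^bsub>FG\<^esub> (?fin a + ?ft b)" for a b
    by (simp add: Phi_def irc src multMDi rc_mult[OF ms_sg])
  have Phi_hom: "Phi \<in> hom (MD \<times>\<times> M2) MDi"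
    unfolding hom_def
  proof (intro CollectI conjI ballI Pi_I)
    fix z assume "z \<in> carrier (MD \<times>\<times> M2)"
    then obtain a b where "z = (?MS #>\<^bsub>FG\<^esub> a, ?MS2 #>\<^bsub>FG\<^esub> b)" using cMD cM2 by auto
    then show "Phi z \<in> carrier MDi" using Phi_rc cMDi by auto
  next
    fix z w assume "z \<in> carrier (MD \<times>\<times> M2)" "w \<in> carrier (MD \<times>\<times> M2)"
    then obtain a1 b1 a2 b2 where zw: "z = (?MS #>\<^bsub>FG\<^esub> a1, ?MS2 #>\<^bsub>FG\<^esub> b1)"
       "w = (?MS #>\<^bsub>FG\<^esub> a2, ?MS2 #>\<^bsub>FG\<^esub> b2)" using cMD cM2 by force
    have zw': "z \<otimes>\<^bsub>MD \<times>\<times> M2\<^esub> w = (?MS #>\<^bsub>FG\<^esub> (a1 + a2), ?MS2 #>\<^bsub>FG\<^esub> (b1 + b2))"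
      using zw by (simp add: MD_def M2_def motives_def mod_mult rc_mult[OF ms_sg])
    have "?fin (a1 + a2) + ?ft (b1 + b2) = (?fin a1 + ?ft b1) + (?fin a2 + ?ft b2)"
      by (simp add: frag_extend_add algebra_simps)
    then show "Phi (z \<otimes>\<^bsub>MD \<times>\<times> M2\<^esub> w) = Phi z \<otimes>\<^bsub>MDi\<^esub> Phi w"
      using zw zw' Phi_rc by (simp add: multMDi rc_mult[OF ms_sg])
  qed
  define qm where "qm = (\<lambda>C. \<Union>x\<in>C. ?MS #>\<^bsub>FG\<^esub> frag_extend qg x)"
  have qm_rc': "qm (?MSi #>\<^bsub>FG\<^esub> c) = ?MS #>\<^bsub>FG\<^esub> frag_extend qg c" for c
    unfolding qm_def by (rule qm_rc)
  define Psi where "Psi = (\<lambda>C. (qm C, p C))"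
  have qfin: "frag_extend qg (?fin a) = a" for a
  proof -
    have "frag_extend qg (?fin a) = frag_extend (qg \<circ> Fin) a" by (rule frag_extend_compose)
    also have "\<dots> = frag_extend frag_of a" by (simp add: o_def)
    finally show ?thesis using frag_expansion[of a] by simp
  qed
  have qft: "frag_extend qg (?ft b) \<in> ?MS" for b
  proof -
    have "frag_extend qg (?ft b) = frag_extend (qg \<circ> from_two) b" by (rule frag_extend_compose)
    also have "\<dots> \<in> ?MS"
    proof (rule fe_in[OF ms_sg])
      fix x :: bool show "(qg \<circ> from_two) x \<in> ?MS"
        using ms_bot sg_zero[OF ms_sg] by (cases x) (simp_all add: from_two_def)
    qed
    finally show ?thesis .
  qed
  have backeq: "?fin (frag_extend qg c) + ?ft (?pt c) - c \<in> ?MSi" for c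
    using subset_UNIV[of "Poly_Mapping.keys c"]
  proof (induction c rule: frag_induction)
    case zero then show ?case using sg_zero[OF ms_sg] by simp
  next
    case (one x) then show ?case
      using ms_bot[where 'a="'a withtop"] sg_zero[OF ms_sg]
      by (cases x) (simp_all add: from_two_def to_two_def bot_withtop_def)
  next
    case (diff a b)
    have eq: "?fin (frag_extend qg (a - b)) + ?ft (?pt (a - b)) - (a - b)
        = (?fin (frag_extend qg a) + ?ft (?pt a) - a) - (?fin (frag_extend qg b) + ?ft (?pt b) - b)"
      by (simp only: frag_extend_diff ab4)
    show ?case unfolding eq by (rule sg_diff[OF ms_sg diff])
  qed
  have Phi_bij: "bij_betw Phi (carrier (MD \<times>\<times> M2)) (carrier MDi)"
  proof (rule bij_betwI[where g = Psi])
    show "Phi \<in> carrier (MD \<times>\<times> M2) \<rightarrow> carrier MDi" using Phi_hom by (simp add: hom_def)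
    show "Psi \<in> carrier MDi \<rightarrow> carrier (MD \<times>\<times> M2)"
    proof
      fix C assume "C \<in> carrier MDi"
      then obtain c where c: "C = ?MSi #>\<^bsub>FG\<^esub> c" using cMDi by blast
      have "Psi C = (?MS #>\<^bsub>FG\<^esub> frag_extend qg c, ?MS2 #>\<^bsub>FG\<^esub> ?pt c)"
        unfolding Psi_def c qm_rc' prc ..
      then show "Psi C \<in> carrier (MD \<times>\<times> M2)"
        unfolding carrier_DirProd mem_Times_iff cMD cM2 by auto
    qed
    show "Psi (Phi z) = z" if "z \<in> carrier (MD \<times>\<times> M2)" for z
    proof -
      obtain X Y where z0: "z = (X, Y)" by (cases z)
      have "X \<in> carrier MD" "Y \<in> carrier M2" using that z0 by auto
      then obtain a b where "X = ?MS #>\<^bsub>FG\<^esub> a" "Y = ?MS2 #>\<^bsub>FG\<^esub> b"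
        unfolding cMD cM2 by blast
      then have z: "z = (?MS #>\<^bsub>FG\<^esub> a, ?MS2 #>\<^bsub>FG\<^esub> b)" using z0 by simp
      have e1: "?MS #>\<^bsub>FG\<^esub> frag_extend qg (?fin a + ?ft b) = ?MS #>\<^bsub>FG\<^esub> a"
        by (rule rc_eq[OF ms_sg]) (simp add: frag_extend_add qfin qft)
      have e2: "?MS2 #>\<^bsub>FG\<^esub> ?pt (?fin a + ?ft b) = ?MS2 #>\<^bsub>FG\<^esub> b"
        by (rule rc_eq[OF ms_sg]) (simp add: frag_extend_add pft pfin)
      show ?thesis unfolding z Phi_rc Psi_def qm_rc' prc e1 e2 ..
    qed
    show "Phi (Psi y) = y" if yc: "y \<in> carrier MDi" for y
    proof -
      obtain c where y: "y = ?MSi #>\<^bsub>FG\<^esub> c" using yc unfolding cMDi by blast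
      have e: "?MSi #>\<^bsub>FG\<^esub> (?fin (frag_extend qg c) + ?ft (?pt c)) = ?MSi #>\<^bsub>FG\<^esub> c"
        by (rule rc_eq[OF ms_sg backeq[of c]])
      have f: "Phi (Psi y) = ?MSi #>\<^bsub>FG\<^esub> (?fin (frag_extend qg c) + ?ft (?pt c))"
        unfolding y Psi_def qm_rc' prc Phi_rc ..
      have "Phi (Psi y) = ?MSi #>\<^bsub>FG\<^esub> c" using f e by (rule trans)
      then show ?thesis using y by metis
    qed
  qed
  have P6: "(\<lambda>(x, y). i x \<otimes>\<^bsub>MDi\<^esub> s y) \<in> iso (MD \<times>\<times> M2) MDi"
    using Phi_hom Phi_bij unfolding Phi_def iso_def by blast
  define zeta where "zeta = (\<lambda>n::int. ?MS2 #>\<^bsub>FG\<^esub> frag_cmul n (frag_of True))"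
  have zeta_hom: "zeta \<in> hom integer_group M2"
    unfolding hom_def
  proof (intro CollectI conjI ballI Pi_I)
    fix n :: int show "zeta n \<in> carrier M2" using cM2 by (auto simp: zeta_def)
  next
    fix m n :: int
    show "zeta (m \<otimes>\<^bsub>integer_group\<^esub> n) = zeta m \<otimes>\<^bsub>M2\<^esub> zeta n"
      by (simp add: zeta_def integer_group_def M2_def motives_def mod_mult rc_mult[OF ms_sg] frag_cmul_distrib)
  qed
  have zeta_bij: "bij_betw zeta (carrier integer_group) (carrier M2)"
    unfolding bij_betw_def
  proof
    show "inj_on zeta (carrier integer_group)"
    proof (rule inj_onI)
      fix m n assume "zeta m = zeta n"
      then have "frag_cmul m (frag_of True) - frag_cmul n (frag_of True) \<in> ?MS2"
        unfolding zeta_def by (rule rc_eqD[OF ms_sg])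
      then have "Poly_Mapping.lookup (frag_cmul m (frag_of True) - frag_cmul n (frag_of True)) True = 0"
        by (rule ms2_true)
      then show "m = n" by (simp add: lookup_minus)
    qed
    show "zeta ` carrier integer_group = carrier M2"
    proof (intro equalityI subsetI)
      fix y assume "y \<in> zeta ` carrier integer_group"
      then show "y \<in> carrier M2" using cM2 by (auto simp: zeta_def)
    next
      fix y assume "y \<in> carrier M2"
      then obtain c where y: "y = ?MS2 #>\<^bsub>FG\<^esub> c" using cM2 by blast
      have "c - frag_cmul (Poly_Mapping.lookup c True) (frag_of True)
            = frag_cmul (Poly_Mapping.lookup c False) (frag_of False)"
        using bool_decomp[of c] by (metis add_diff_cancel_right')
      also have "\<dots> \<in> ?MS2"
        using cmul_in[OF ms_sg ms_bot[where 'a=bool, simplified]] by simp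
      finally have "y = zeta (Poly_Mapping.lookup c True)"
        unfolding y zeta_def by (rule rc_eq[OF ms_sg])
      then show "y \<in> zeta ` carrier integer_group" by simp
    qed
  qed
  have "integer_group \<cong> M2"
    using zeta_hom zeta_bij unfolding is_iso_def iso_def by blast
  then have P7: "M2 \<cong> integer_group"
    by (rule group.iso_sym[OF group_integer_group])
  show ?thesis using ih ph sh P4 P5 P6 P7 by blast
qed

end
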